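(* Let $k\ge2$ be an integer and let $D$ be a digraph of order $n$ with no isolated vertex. Then $\gamma_{trk}(D)=k$ if and only if one of the following holds: (a) $n=k$; (b) $n\ge k+1$ and there exists a set $X=\{v_1,\dots,v_t\}\subseteq V(D)$ with $2\le t\le k$ such that the induced subdigraph $D[X]$ has no isolated vertex and $V(D)\setminus X\subseteq N^+(v_i)$ for every $1\le i\le t$.
   Context: All digraphs are finite, with no loops or multiple arcs (pairs of opposite arcs are allowed). $N^-(v)$, $N^+(v)$ denote the in- and out-neighborhoods of $v$; $D[X]$ is the subdigraph induced by $X$. A vertex is isolated if it has no in-neighbor and no out-neighbor. For a positive integer $k$, a $k$-rainbow dominating function ($k$RDF) on $D$ is a function $f:V(D)\to\mathcal P(\{1,\dots,k\})$ such that every $v$ with $f(v)=\emptyset$ satisfies $\bigcup_{u\in N^-(v)}f(u)=\{1,\dots,k\}$; its weight is $\omega(f)=\sum_v|f(v)|$. If $D$ has no isolated vertex, a total $k$RDF (T$k$RDF) is a $k$RDF $f$ such that the subdigraph induced by $\{v:f(v)\ne\emptyset\}$ has no isolated vertex; $\gamma_{trk}(D)$ is the minimum weight of a T$k$RDF. *)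

theory Defs
  imports Main
begin

definition digraph :: "'a set \<Rightarrow> ('a \<times> 'a) set \<Rightarrow> bool" where
  "digraph V A \<longleftrightarrow> finite V \<and> A \<subseteq> V \<times> V \<and> (\<forall>v. (v, v) \<notin> A)"

definition in_nbrs :: "'a set \<Rightarrow> ('a \<times> 'a) set \<Rightarrow> 'a \<Rightarrow> 'a set" where
  "in_nbrs V A v = {u \<in> V. (u, v) \<in> A}"

definition out_nbrs :: "'a set \<Rightarrow> ('a \<times> 'a) set \<Rightarrow> 'a \<Rightarrow> 'a set" where
  "out_nbrs V A v = {u \<in> V. (v, u) \<in> A}"

definition induced_arcs :: "('a \<times> 'a) set \<Rightarrow> 'a set \<Rightarrow> ('a \<times> 'a) set" where
  "induced_arcs A X = A \<inter> (X \<times> X)"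

definition isolated :: "'a set \<Rightarrow> ('a \<times> 'a) set \<Rightarrow> 'a \<Rightarrow> bool" where
  "isolated V A v \<longleftrightarrow> in_nbrs V A v = {} \<and> out_nbrs V A v = {}"

definition no_isolated :: "'a set \<Rightarrow> ('a \<times> 'a) set \<Rightarrow> bool" where
  "no_isolated V A \<longleftrightarrow> (\<forall>v\<in>V. \<not> isolated V A v)"

definition kRDF :: "'a set \<Rightarrow> ('a \<times> 'a) set \<Rightarrow> nat \<Rightarrow> ('a \<Rightarrow> nat set) \<Rightarrow> bool" where
  "kRDF V A k f \<longleftrightarrow>
     (\<forall>v\<in>V. f v \<subseteq> {1..k}) \<and>
     (\<forall>v\<in>V. f v = {} \<longrightarrow> (\<Union>u\<in>in_nbrs V A v. f u) = {1..k})"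

definition TkRDF :: "'a set \<Rightarrow> ('a \<times> 'a) set \<Rightarrow> nat \<Rightarrow> ('a \<Rightarrow> nat set) \<Rightarrow> bool" where
  "TkRDF V A k f \<longleftrightarrow> kRDF V A k f \<and>
     (let P = {v \<in> V. f v \<noteq> {}} in no_isolated P (induced_arcs A P))"

definition weight :: "'a set \<Rightarrow> ('a \<Rightarrow> nat set) \<Rightarrow> nat" where
  "weight V f = (\<Sum>v\<in>V. card (f v))"

definition gamma_trk :: "'a set \<Rightarrow> ('a \<times> 'a) set \<Rightarrow> nat \<Rightarrow> nat" where
  "gamma_trk V A k = Min {weight V f | f. TkRDF V A k f}"

end

theory Submission
  imports Defs
begin

lemma wfin:
  assumes "finite V"
  shows "finite {weight V f | f. TkRDF V A k f}"
proof (rule finite_subset)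
  show "{weight V f | f. TkRDF V A k f} \<subseteq> {..k * card V}"
  proof clarsimp
    fix f assume "TkRDF V A k f"
    then have "\<forall>v\<in>V. f v \<subseteq> {1..k}" by (simp add: TkRDF_def kRDF_def)
    then have "\<forall>v\<in>V. card (f v) \<le> k"
      by (metis card_atLeastAtMost card_mono diff_Suc_1 finite_atLeastAtMost)
    then have "weight V f \<le> (\<Sum>v\<in>V. k)" unfolding weight_def by (metis (no_types, lifting) sum_mono)
    then show "weight V f \<le> k * card V" by (simp add: mult.commute)
  qed
qed simp

lemma upper:
  assumes "k \<ge> 1" "digraph V A" "no_isolated V A"
  shows "TkRDF V A k (\<lambda>_. {1})" "weight V (\<lambda>_. {1}) = card V"
proof -
  have "{v \<in> V. (\<lambda>_. {1::nat}) v \<noteq> {}} = V" by auto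
  moreover have "induced_arcs A V = A" using assms(2) by (auto simp: induced_arcs_def digraph_def)
  ultimately show "TkRDF V A k (\<lambda>_. {1})" using assms
    by (simp add: TkRDF_def kRDF_def Let_def)
  show "weight V (\<lambda>_. {1}) = card V" by (simp add: weight_def)
qed

lemma empty_bound:
  assumes "finite V" "kRDF V A k f" "v \<in> V" "f v = {}"
  shows "k \<le> (\<Sum>u\<in>in_nbrs V A v. card (f u))"
proof -
  have "k = card (\<Union>u\<in>in_nbrs V A v. f u)" using assms by (simp add: kRDF_def)
  also have "\<dots> \<le> (\<Sum>u\<in>in_nbrs V A v. card (f u))"
    by (rule card_UN_le) (use assms(1) in \<open>simp add: in_nbrs_def\<close>)
  finally show ?thesis .
qed

lemma lower:
  assumes "finite V" "TkRDF V A k f"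
  shows "min (card V) k \<le> weight V f"
proof (cases "\<exists>v\<in>V. f v = {}")
  case True
  then obtain v where v: "v \<in> V" "f v = {}" by auto
  have kr: "kRDF V A k f" using assms by (simp add: TkRDF_def)
  have "k \<le> (\<Sum>u\<in>in_nbrs V A v. card (f u))" by (rule empty_bound[OF assms(1) kr v])
  also have "\<dots> \<le> weight V f" unfolding weight_def
    by (rule sum_mono2) (use assms(1) in \<open>auto simp: in_nbrs_def\<close>)
  finally show ?thesis by simp
next
  case False
  have "\<forall>v\<in>V. f v \<subseteq> {1..k}" using assms by (simp add: TkRDF_def kRDF_def)
  then have "\<forall>v\<in>V. 1 \<le> card (f v)" using False
    by (metis One_nat_def Suc_leI card_gt_0_iff finite_atLeastAtMost finite_subset)
  then have "(\<Sum>v\<in>V. 1) \<le> weight V f" unfolding weight_def by (metis (no_types, lifting) sum_mono)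
  then show ?thesis by simp
qed

theorem theorem3p5:
  fixes V :: "'a set" and A :: "('a \<times> 'a) set" and k :: nat
  assumes "k \<ge> 2" and "digraph V A" and "no_isolated V A"
  shows "gamma_trk V A k = k \<longleftrightarrow>
    (card V = k \<or>
     (card V \<ge> k + 1 \<and>
      (\<exists>X. X \<subseteq> V \<and> 2 \<le> card X \<and> card X \<le> k \<and>
           no_isolated X (induced_arcs A X) \<and>
           (\<forall>v\<in>X. V - X \<subseteq> out_nbrs V A v))))"
proof -
  have fin: "finite V" using assms(2) by (simp add: digraph_def)
  define S where "S = {weight V f | f. TkRDF V A k f}"
  have finS: "finite S" unfolding S_def by (rule wfin[OF fin])
  have up: "TkRDF V A k (\<lambda>_. {1})" "weight V (\<lambda>_. {1}) = card V"
    using upper[of k V A] assms by auto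
  have neS: "card V \<in> S" unfolding S_def using up by force
  have g: "gamma_trk V A k = Min S" unfolding S_def gamma_trk_def by simp
  have gle: "gamma_trk V A k \<le> card V" using g finS neS by simp
  have gge: "min (card V) k \<le> gamma_trk V A k"
  proof -
    have "Min S \<in> S" using finS neS Min_in by blast
    then show ?thesis using lower[OF fin] g unfolding S_def by auto
  qed
  show ?thesis
  proof
    assume gk: "gamma_trk V A k = k"
    show "card V = k \<or> (card V \<ge> k + 1 \<and> (\<exists>X. X \<subseteq> V \<and> 2 \<le> card X \<and> card X \<le> k \<and>
           no_isolated X (induced_arcs A X) \<and> (\<forall>v\<in>X. V - X \<subseteq> out_nbrs V A v)))"
    proof (cases "card V = k")
      case True then show ?thesis by simp
    next
      case False
      with gle gk have big: "card V \<ge> k + 1" by simp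
      have "Min S \<in> S" using finS neS Min_in by blast
      then obtain f where tf: "TkRDF V A k f" and wf: "weight V f = k"
        using g gk unfolding S_def by auto
      have kr: "kRDF V A k f" using tf by (simp add: TkRDF_def)
      define P where "P = {v \<in> V. f v \<noteq> {}}"
      have niP: "no_isolated P (induced_arcs A P)" using tf by (simp add: TkRDF_def P_def Let_def)
      have PV: "P \<subseteq> V" and finP: "finite P" using fin by (auto simp: P_def)
      have sub: "\<forall>v\<in>V. f v \<subseteq> {1..k}" using kr by (simp add: kRDF_def)
      have wP: "(\<Sum>v\<in>P. card (f v)) = k"
      proof -
        have "(\<Sum>v\<in>P. card (f v)) = (\<Sum>v\<in>V. card (f v))"
          by (rule sum.mono_neutral_left) (use fin in \<open>auto simp: P_def\<close>)
        then show ?thesis using wf by (simp add: weight_def)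
      qed
      have ge1: "\<forall>v\<in>P. 1 \<le> card (f v)" using sub unfolding P_def
        by (metis (mono_tags, lifting) One_nat_def Suc_leI card_gt_0_iff finite_atLeastAtMost finite_subset mem_Collect_eq)
      have cP: "card P \<le> k"
      proof -
        have "(\<Sum>v\<in>P. 1) \<le> (\<Sum>v\<in>P. card (f v))" using ge1 by (metis (no_types, lifting) sum_mono)
        then show ?thesis using wP by simp
      qed
      have Pne: "P \<noteq> {}" using wP assms(1) by auto
      then obtain x where x: "x \<in> P" by auto
      have "\<not> isolated P (induced_arcs A P) x" using niP x by (simp add: no_isolated_def)
      then obtain u where u: "u \<in> P" "(u, x) \<in> A \<or> (x, u) \<in> A"
        by (auto simp: isolated_def in_nbrs_def out_nbrs_def induced_arcs_def)
      have "u \<noteq> x" using u assms(2) by (auto simp: digraph_def)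
      then have "card {x, u} = 2" by simp
      moreover have "{x, u} \<subseteq> P" using x u by simp
      ultimately have c2: "2 \<le> card P" using card_mono[OF finP] by metis
      have key: "P \<subseteq> in_nbrs V A y" if y: "y \<in> V" "f y = {}" for y
      proof
        fix w assume w: "w \<in> P"
        show "w \<in> in_nbrs V A y"
        proof (rule ccontr)
          assume nw: "w \<notin> in_nbrs V A y"
          have wV: "w \<in> V" using w PV by auto
          have "k \<le> (\<Sum>u\<in>in_nbrs V A y. card (f u))" by (rule empty_bound[OF fin kr y])
          also have "\<dots> \<le> (\<Sum>u\<in>V - {w}. card (f u))"
            by (rule sum_mono2) (use fin nw in \<open>auto simp: in_nbrs_def\<close>)
          also have "\<dots> = weight V f - card (f w)"
            unfolding weight_def using sum.remove[OF fin wV, of "\<lambda>u. card (f u)"] by simp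
          finally have "k \<le> k - card (f w)" using wf by simp
          moreover have "1 \<le> card (f w)" using ge1 w by blast
          ultimately show False using assms(1) by linarith
        qed
      qed
      have "\<forall>v\<in>P. V - P \<subseteq> out_nbrs V A v"
      proof (intro ballI subsetI)
        fix v y assume v: "v \<in> P" and y: "y \<in> V - P"
        then have "f y = {}" by (auto simp: P_def)
        then have "v \<in> in_nbrs V A y" using key y v by auto
        then show "y \<in> out_nbrs V A v" using y by (simp add: in_nbrs_def out_nbrs_def)
      qed
      then show ?thesis using big PV c2 cP niP by blast
    qed
  next
    assume R: "card V = k \<or> (card V \<ge> k + 1 \<and> (\<exists>X. X \<subseteq> V \<and> 2 \<le> card X \<and> card X \<le> k \<and>
           no_isolated X (induced_arcs A X) \<and> (\<forall>v\<in>X. V - X \<subseteq> out_nbrs V A v)))"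
    show "gamma_trk V A k = k"
    proof (cases "card V = k")
      case True then show ?thesis using gle gge by simp
    next
      case False
      with R obtain X where big: "card V \<ge> k + 1" and X: "X \<subseteq> V" "2 \<le> card X" "card X \<le> k"
        "no_isolated X (induced_arcs A X)" "\<forall>v\<in>X. V - X \<subseteq> out_nbrs V A v" by blast
      have finX: "finite X" using X(1) fin finite_subset by blast
      have "X \<noteq> {}" using X(2) by auto
      then obtain x0 where x0: "x0 \<in> X" by auto
      have cX': "card (X - {x0}) = card {1..card X - 1}" using x0 finX by simp
      obtain h where h: "bij_betw h (X - {x0}) {1..card X - 1}"
        using finite_same_card_bij[OF _ _ cX'] finX by auto
      define B where "B = {1..k} - {1..card X - 1}"
      have "B = {card X..k}" unfolding B_def using X(2) by auto
      then have cB: "card B = k - (card X - 1)" using X(2) by simp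
      define f where "f v = (if v \<in> X - {x0} then {h v} else if v = x0 then B else {})" for v
      have hi: "h v \<in> {1..card X - 1}" if "v \<in> X - {x0}" for v
        using h that bij_betwE by blast
      have fsub: "\<forall>v\<in>V. f v \<subseteq> {1..k}"
        using hi X(3) by (auto simp: f_def B_def) (meson diff_le_self le_trans)
      have Bne: "B \<noteq> {}"
      proof
        assume "B = {}"
        then have "k - (card X - 1) = 0" using cB by simp
        then show False using X(2) X(3) by linarith
      qed
      have Pe: "{v \<in> V. f v \<noteq> {}} = X" using X(1) Bne x0 by (auto simp: f_def)
      have cov: "(\<Union>u\<in>in_nbrs V A v. f u) = {1..k}" if v: "v \<in> V" "f v = {}" for v
      proof
        show "(\<Union>u\<in>in_nbrs V A v. f u) \<subseteq> {1..k}" using fsub by (auto simp: in_nbrs_def)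
        have vX: "v \<in> V - X" using v Pe by auto
        then have XI: "X \<subseteq> in_nbrs V A v" using X(5) X(1) by (auto simp: in_nbrs_def out_nbrs_def)
        show "{1..k} \<subseteq> (\<Union>u\<in>in_nbrs V A v. f u)"
        proof
          fix i assume i: "i \<in> {1..k}"
          show "i \<in> (\<Union>u\<in>in_nbrs V A v. f u)"
          proof (cases "i \<in> {1..card X - 1}")
            case True
            then obtain w where "w \<in> X - {x0}" "h w = i" using h by (metis bij_betw_iff_bijections)
            then show ?thesis using XI by (auto simp: f_def)
          next
            case False
            then have "i \<in> f x0" using i x0 by (simp add: f_def B_def)
            then show ?thesis using XI x0 by auto
          qed
        qed
      qed
      have tf: "TkRDF V A k f"
        unfolding TkRDF_def kRDF_def Let_def Pe using fsub cov X(4) by auto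
      have wf: "weight V f = k"
      proof -
        have "weight V f = (\<Sum>v\<in>X. card (f v))" unfolding weight_def
          by (rule sum.mono_neutral_right) (use fin X(1) Pe in auto)
        also have "\<dots> = card (f x0) + (\<Sum>v\<in>X - {x0}. card (f v))"
          using sum.remove[OF finX x0] by simp
        also have "(\<Sum>v\<in>X - {x0}. card (f v)) = (\<Sum>v\<in>X - {x0}. 1)"
          by (rule sum.cong) (auto simp: f_def)
        also have "card (f x0) = card B" using x0 by (simp add: f_def)
        finally show ?thesis using cB X(2) X(3) finX x0 by simp
      qed
      have "k \<in> S" unfolding S_def using tf wf by force
      then have "Min S \<le> k" using finS by simp
      moreover have "k \<le> Min S" using gge g big by simp
      ultimately show ?thesis using g by simp
    qed
  qed
qed

end
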